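(* Let $0<\lambda<1$ and $b\in\mathbb{D}$. Then the functions $f_b(z)=(1-|b|^2)^{\frac{\lambda-1}{2}}(\sigma_b(z)-b)$ and $F_b(z)=(1-|b|^2)(1-\overline{b}z)^{\frac{\lambda-3}{2}}$ belong to $\mathcal{L}^{2,\lambda}(\mathbb{D})$, and $\|f_b\|_{\mathcal{L}^{2,\lambda}}\lesssim 1$, $\|F_b\|_{\mathcal{L}^{2,\lambda}}\lesssim 1$, with implicit constants independent of $b$.
   Context: $\mathbb{D}$ is the open unit disc, $dA=\frac{1}{\pi}dx\,dy$, and $\sigma_b(z)=\frac{b-z}{1-\overline{b}z}$. $H^2(\mathbb{D})$ is the Hardy space. For an arc $I\subset\partial\mathbb{D}$, $|I|=\frac{1}{2\pi}\int_I|d\zeta|$, $f_I=\frac{1}{|I|}\int_I f(\zeta)\frac{|d\zeta|}{2\pi}$, and $S(I)=\{z\in\mathbb{D}:1-|I|\le |z|<1,\ z/|z|\in I\}$. For $0<\lambda\le 1$, $\mathcal{L}^{2,\lambda}(\mathbb{D})$ is the set of $f\in H^2(\mathbb{D})$ with $\sup_{I}\big(|I|^{-\lambda}\int_I|f(\zeta)-f_I|^2\frac{|d\zeta|}{2\pi}\big)^{1/2}<\infty$, normed by $\|f\|_{\mathcal{L}^{2,\lambda}}=|f(0)|+\sup_{I}\big(|I|^{-\lambda}\int_{S(I)}|f'(z)|^2(1-|z|^2)dA(z)\big)^{1/2}$. The power $(1-\overline{b}z)^{\frac{\lambda-3}{2}}$ uses the principal branch. *)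

theory Defs
  imports "HOL-Complex_Analysis.Complex_Analysis"
begin

definition disc :: "complex set" where "disc = ball 0 1"

definition sigma :: "complex \<Rightarrow> complex \<Rightarrow> complex" where
  "sigma b z = (b - z) / (1 - cnj b * z)"

definition H2 :: "(complex \<Rightarrow> complex) set" where
  "H2 = {f. f holomorphic_on disc \<and>
     (\<exists>M::real. \<forall>r\<in>{0..<1}.
        (\<integral>\<^sup>+ t. indicator {0..2*pi} t * ennreal ((cmod (f (complex_of_real r * cis t)))\<^sup>2 / (2*pi)) \<partial>lborel)
          \<le> ennreal M)}"

definition bdry :: "(complex \<Rightarrow> complex) \<Rightarrow> real \<Rightarrow> complex" where
  "bdry f t = Lim (at_left 1) (\<lambda>r::real. f (complex_of_real r * cis t))"

text \<open>Arcs of the unit circle: I = {e^{it} : a \<le> t \<le> a + 2 pi l}, 0 < l \<le> 1, so |I| = l.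
  Averages f_I over the arc (w.r.t. normalized arc length).\<close>
definition arc_avg :: "(complex \<Rightarrow> complex) \<Rightarrow> real \<Rightarrow> real \<Rightarrow> complex" where
  "arc_avg f a l = (1 / l) * ((1 / (2*pi)) * (LBINT t=a..a + 2*pi*l. bdry f t))"

definition Sbox :: "real \<Rightarrow> real \<Rightarrow> complex set" where
  "Sbox a l = {z. 1 - l \<le> cmod z \<and> cmod z < 1 \<and> (\<exists>t\<in>{a..a + 2*pi*l}. z / complex_of_real (cmod z) = cis t)}"

definition ennsqrt :: "ennreal \<Rightarrow> ennreal" where
  "ennsqrt x = (if x = top then top else ennreal (sqrt (enn2real x)))"

definition bdry_morrey :: "real \<Rightarrow> (complex \<Rightarrow> complex) \<Rightarrow> ennreal" where
  "bdry_morrey lam f = (SUP (a, l)\<in>UNIV \<times> {0<..1}.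
     ennsqrt (ennreal (l powr (-lam)) *
       (\<integral>\<^sup>+ t. indicator {a..a + 2*pi*l} t *
           ennreal ((cmod (bdry f t - arc_avg f a l))\<^sup>2 / (2*pi)) \<partial>lborel)))"

definition L2lam :: "real \<Rightarrow> (complex \<Rightarrow> complex) set" where
  "L2lam lam = {f. f \<in> H2 \<and> bdry_morrey lam f < top}"

text \<open>The norm, with dA = dx dy / pi.\<close>
definition L2lam_norm :: "real \<Rightarrow> (complex \<Rightarrow> complex) \<Rightarrow> ennreal" where
  "L2lam_norm lam f = ennreal (cmod (f 0)) + (SUP (a, l)\<in>UNIV \<times> {0<..1}.
     ennsqrt (ennreal (l powr (-lam)) *
       (\<integral>\<^sup>+ z. indicator (Sbox a l) z *
           ennreal ((cmod (deriv f z))\<^sup>2 * (1 - (cmod z)\<^sup>2) / pi) \<partial>lborel)))"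

end

theory Submission
  imports Defs
begin


lemma emeasure_ball_le:
  fixes c :: complex assumes "0 \<le> r"
  shows "emeasure lborel (ball c r) \<le> ennreal (4 * r^2)"
proof -
  let ?l = "c - of_real r - \<i> * of_real r" and ?u = "c + of_real r + \<i> * of_real r"
  have sub: "ball c r \<subseteq> cbox ?l ?u"
  proof
    fix z assume "z \<in> ball c r"
    hence d: "cmod (z - c) < r" by (simp add: dist_norm norm_minus_commute)
    have "\<bar>Re (z - c)\<bar> \<le> cmod (z - c)" "\<bar>Im (z - c)\<bar> \<le> cmod (z - c)"
      by (rule abs_Re_le_cmod, rule abs_Im_le_cmod)
    with d show "z \<in> cbox ?l ?u"
      by (auto simp: cbox_complex_eq)
  qed
  have "emeasure lborel (ball c r) \<le> emeasure lborel (cbox ?l ?u)"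
    by (rule emeasure_mono[OF sub]) simp
  also have "\<dots> = ennreal (4 * r^2)"
    using assms by (simp add: emeasure_lborel_cbox_eq Basis_complex_def power2_eq_square)
  finally show ?thesis .
qed



lemma cis_diff_le: "cmod (cis t - cis a) \<le> \<bar>t - a\<bar>"
proof -
  have e: "cis t - cis a = cis a * (cis (t - a) - 1)"
    by (simp add: algebra_simps cis_mult)
  have "(cmod (cis (t - a) - 1))\<^sup>2 = (cos (t-a) - 1)\<^sup>2 + (sin (t-a))\<^sup>2"
    by (simp add: cmod_power2)
  also have "\<dots> = 2 - 2 * cos (t - a)"
    using sin_cos_squared_add[of "t-a"] by (simp add: power2_eq_square algebra_simps)
  also have "\<dots> = 4 * (sin ((t-a)/2))\<^sup>2"
  proof -
    have "t - a = 2 * ((t-a)/2)" by simp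
    hence "cos (t - a) = cos (2 * ((t-a)/2))" by (rule arg_cong)
    thus ?thesis using cos_double_sin[of "(t-a)/2"] by simp
  qed
  also have "\<dots> \<le> 4 * ((t-a)/2)\<^sup>2"
    using abs_sin_x_le_abs_x[of "(t-a)/2"]
    by (intro mult_left_mono) (simp_all add: abs_le_square_iff[symmetric] del: abs_divide)
  also have "\<dots> = (t-a)\<^sup>2" by (simp add: power2_eq_square)
  finally have "cmod (cis (t - a) - 1) \<le> \<bar>t - a\<bar>"
    using abs_le_square_iff by (metis abs_norm_cancel)
  thus ?thesis by (simp add: e norm_mult)
qed

lemma Sbox_facts:
  assumes "z \<in> Sbox a l" "0 < l" "l \<le> 1"
  shows "cmod z < 1" "1 - cmod z \<le> l" "z \<in> ball (cis a) (9 * l)" "z \<noteq> 0"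
proof -
  from assms(1) obtain t where t: "t \<in> {a..a + 2*pi*l}" "z / complex_of_real (cmod z) = cis t"
    and r: "1 - l \<le> cmod z" "cmod z < 1" unfolding Sbox_def by auto
  show "cmod z < 1" "1 - cmod z \<le> l" using r by auto
  show nz: "z \<noteq> 0"
  proof
    assume "z = 0" with t(2) have "cis t = 0" by simp
    thus False using norm_cis[of t] by simp
  qed
  hence zc: "z = of_real (cmod z) * cis t" using t(2)
    by (simp add: field_simps)
  have "cmod (z - cis a) \<le> cmod (z - cis t) + cmod (cis t - cis a)"
    using norm_triangle_ineq[of "z - cis t" "cis t - cis a"] by simp
  also have "cmod (z - cis t) = 1 - cmod z"
  proof -
    have "z - cis t = of_real (cmod z - 1) * cis t" by (subst zc) (simp add: algebra_simps)
    hence "cmod (z - cis t) = cmod (of_real (cmod z - 1) :: complex)" by (simp add: norm_mult)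
    also have "\<dots> = 1 - cmod z" using r by (simp only: norm_of_real)
    finally show ?thesis .
  qed
  also have "cmod (cis t - cis a) \<le> 2 * pi * l"
    using cis_diff_le[of t a] t(1) by auto
  finally have "cmod (z - cis a) \<le> 1 - cmod z + 2*pi*l" by simp
  also have "\<dots> < 9 * l"
  proof -
    have "2*pi*l < 2*4*l" using pi_less_4 assms(2) by simp
    thus ?thesis using r by linarith
  qed
  finally show "z \<in> ball (cis a) (9 * l)" by (simp add: dist_norm norm_minus_commute)
qed



definition Ub :: "complex \<Rightarrow> complex set" where "Ub b = {z. cmod (cnj b * z) < 1}"

lemma open_Ub: "open (Ub b)"
  unfolding Ub_def by (intro open_Collect_less continuous_intros)

lemma Ub_Re: "z \<in> Ub b \<Longrightarrow> 0 < Re (1 - cnj b * z)"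
  unfolding Ub_def using complex_Re_le_cmod[of "cnj b * z"] by simp

lemma Ub_nonpos: "z \<in> Ub b \<Longrightarrow> 1 - cnj b * z \<notin> \<real>\<^sub>\<le>\<^sub>0"
proof
  assume "z \<in> Ub b" "1 - cnj b * z \<in> \<real>\<^sub>\<le>\<^sub>0"
  from this(2) have "Re (1 - cnj b * z) \<le> 0" by (rule nonpos_Reals_cases) simp
  with Ub_Re[OF \<open>z \<in> Ub b\<close>] show False by simp
qed

lemma Ub_nz: "z \<in> Ub b \<Longrightarrow> 1 - cnj b * z \<noteq> 0"
proof
  assume "z \<in> Ub b" "1 - cnj b * z = 0"
  with Ub_Re[OF this(1)] show False by simp
qed

lemma cball_Ub: "b \<in> disc \<Longrightarrow> cball 0 1 \<subseteq> Ub b"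
proof
  fix z :: complex assume b: "b \<in> disc" and z: "z \<in> cball 0 1"
  have "cmod (cnj b * z) = cmod b * cmod z" by (simp add: norm_mult)
  also have "\<dots> \<le> cmod b" using z mult_left_mono[of "cmod z" 1 "cmod b"] by simp
  also have "\<dots> < 1" using b by (simp add: disc_def)
  finally show "z \<in> Ub b" by (simp add: Ub_def)
qed

lemma disc_Ub: "b \<in> disc \<Longrightarrow> disc \<subseteq> Ub b"
  using cball_Ub[of b] by (auto simp: disc_def)

lemma sigma_deriv:
  assumes "z \<in> Ub b"
  shows "((\<lambda>z. c * (sigma b z - b)) has_field_derivative
           (c * ((cmod b)\<^sup>2 - 1) / (1 - cnj b * z)\<^sup>2)) (at z)"
proof -
  have nz: "1 - cnj b * z \<noteq> 0" using Ub_nz[OF assms] .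
  have d: "((\<lambda>z. c * ((b - z) / (1 - cnj b * z) - b)) has_field_derivative
           c * (((- 1) * (1 - cnj b * z) - (b - z) * (- cnj b)) / (1 - cnj b * z)^2 - 0)) (at z)"
    by (intro derivative_eq_intros DERIV_divide) (use nz in \<open>auto simp: power2_eq_square\<close>)
  have eq: "c * (((- 1) * (1 - cnj b * z) - (b - z) * (- cnj b)) / (1 - cnj b * z)^2 - 0)
      = c * ((cmod b)\<^sup>2 - 1) / (1 - cnj b * z)\<^sup>2"
    using nz by (simp add: field_simps complex_norm_square[symmetric] mult.commute)
  show ?thesis unfolding sigma_def using d[unfolded eq] .
qed

lemma powr_deriv:
  assumes "z \<in> Ub b"
  shows "((\<lambda>z. k * (1 - cnj b * z) powr e) has_field_derivative
           (k * (e * (1 - cnj b * z) powr (e - 1) * (- cnj b)))) (at z)"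
proof -
  have d1: "((\<lambda>w. w powr e) has_field_derivative (e * (1 - cnj b * z) powr (e - 1))) (at (1 - cnj b * z))"
    by (rule has_field_derivative_powr) (rule Ub_nonpos[OF assms])
  have d2: "((\<lambda>z. 1 - cnj b * z) has_field_derivative (- cnj b)) (at z)"
    by (auto intro!: derivative_eq_intros)
  from DERIV_chain2[where f="\<lambda>w. w powr e", OF d1 d2]
  have "((\<lambda>z. (1 - cnj b * z) powr e) has_field_derivative
           (e * (1 - cnj b * z) powr (e - 1) * (- cnj b))) (at z)"
    by simp
  thus ?thesis by (rule DERIV_cmult)
qed



lemma w_lower:
  assumes "b \<in> disc" "z \<in> disc"
  shows "1 - cmod b \<le> cmod (1 - cnj b * z)"
proof -
  have "cmod b * cmod z \<le> cmod b" using assms mult_left_mono[of "cmod z" 1 "cmod b"] by (simp add: disc_def)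
  moreover have "1 - cmod (cnj b * z) \<le> cmod (1 - cnj b * z)"
    using norm_triangle_ineq2[of 1 "cnj b * z"] by simp
  ultimately show ?thesis by (simp add: norm_mult)
qed

lemma D_facts:
  assumes "b \<in> disc"
  shows "0 < 1 - cmod b" "1 - cmod b \<le> 1 - (cmod b)\<^sup>2" "1 - (cmod b)\<^sup>2 \<le> 2 * (1 - cmod b)"
    "0 < 1 - (cmod b)\<^sup>2"
proof -
  have b: "0 \<le> cmod b" "cmod b < 1" using assms by (auto simp: disc_def)
  show "0 < 1 - cmod b" using b by simp
  show "1 - cmod b \<le> 1 - (cmod b)\<^sup>2" using b mult_left_mono[of "cmod b" 1 "cmod b"] by (simp add: power2_eq_square)
  have sq: "0 \<le> (1 - cmod b)\<^sup>2" by simp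
  show "1 - (cmod b)\<^sup>2 \<le> 2 * (1 - cmod b)" using sq by (simp add: power2_eq_square algebra_simps)
  have "(cmod b)\<^sup>2 \<le> cmod b" using b mult_left_mono[of "cmod b" 1 "cmod b"] by (simp add: power2_eq_square)
  then show "0 < 1 - (cmod b)\<^sup>2" using b by simp
qed

lemma Dpow_le:
  assumes "b \<in> disc" "0 < lam" "lam < 1"
  shows "(1 - (cmod b)\<^sup>2) powr (lam + 1) \<le> 4 * (1 - cmod b) powr (lam + 1)"
proof -
  note D = D_facts[OF assms(1)]
  have "(1 - (cmod b)\<^sup>2) powr (lam + 1) \<le> (2 * (1 - cmod b)) powr (lam + 1)"
    using D assms by (intro powr_mono2) auto
  also have "\<dots> = 2 powr (lam + 1) * (1 - cmod b) powr (lam + 1)"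
    using D by (intro powr_mult; simp)
  also have "2 powr (lam + 1) \<le> 2 powr 2" using assms by (intro powr_mono) auto
  hence "2 powr (lam + 1) * (1 - cmod b) powr (lam + 1) \<le> 4 * (1 - cmod b) powr (lam + 1)"
    by (intro mult_right_mono) auto
  finally show ?thesis .
qed

lemma deriv_fb_bound:
  assumes b: "b \<in> disc" and z: "z \<in> disc" and lam: "0 < lam" "lam < 1"
  shows "(cmod (deriv (\<lambda>z. complex_of_real ((1 - (cmod b)\<^sup>2) powr ((lam - 1) / 2)) * (sigma b z - b)) z))\<^sup>2
      \<le> 9 * (1 - cmod b) powr (lam + 1) / (cmod (1 - cnj b * z))^4"
proof -
  define D where "D = 1 - (cmod b)\<^sup>2"
  define W where "W = cmod (1 - cnj b * z)"
  note DF = D_facts[OF b]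
  have D0: "0 < D" using DF by (simp add: D_def)
  have zU: "z \<in> Ub b" using disc_Ub[OF b] z by auto
  have W0: "0 < W" using Ub_nz[OF zU] by (simp add: W_def)
  have "deriv (\<lambda>z. complex_of_real (D powr ((lam - 1) / 2)) * (sigma b z - b)) z
      = complex_of_real (D powr ((lam - 1) / 2)) * ((cmod b)\<^sup>2 - 1) / (1 - cnj b * z)\<^sup>2"
    by (rule DERIV_imp_deriv[OF sigma_deriv[OF zU]])
  hence "cmod (deriv (\<lambda>z. complex_of_real (D powr ((lam - 1) / 2)) * (sigma b z - b)) z)
      = D powr ((lam - 1) / 2) * D / W\<^sup>2"
  proof -
    assume e: "deriv (\<lambda>z. complex_of_real (D powr ((lam - 1) / 2)) * (sigma b z - b)) z
      = complex_of_real (D powr ((lam - 1) / 2)) * ((cmod b)\<^sup>2 - 1) / (1 - cnj b * z)\<^sup>2"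
    have "cmod (((cmod b)\<^sup>2 - 1) :: complex) = D"
    proof -
      have "(((cmod b)\<^sup>2 - 1) :: complex) = complex_of_real (- D)" by (simp add: D_def)
      thus ?thesis using D0 by (simp only: norm_of_real abs_minus_cancel)
    qed
    thus ?thesis unfolding e using D0 by (simp add: norm_mult norm_divide norm_power W_def)
  qed
  hence "(cmod (deriv (\<lambda>z. complex_of_real (D powr ((lam - 1) / 2)) * (sigma b z - b)) z))\<^sup>2
      = (D powr ((lam - 1) / 2))\<^sup>2 * D\<^sup>2 / W^4"
    by (simp add: power_divide power_mult_distrib flip: power_mult)
  also have "(D powr ((lam - 1) / 2))\<^sup>2 * D\<^sup>2 = D powr (lam + 1)"
  proof -
    have "(D powr ((lam - 1) / 2))\<^sup>2 = D powr (lam - 1)"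
      using D0 by (simp add: power2_eq_square flip: powr_add)
    moreover have "D powr (lam + 1) = D powr (lam - 1) * D powr 2"
    proof -
      have "D powr (lam + 1) = D powr ((lam - 1) + 2)" by (rule arg_cong[where f="\<lambda>x. D powr x"]) simp
      also have "\<dots> = D powr (lam - 1) * D powr 2" by (rule powr_add)
      finally show ?thesis .
    qed
    moreover have "D powr 2 = D\<^sup>2" using D0 by (simp add: powr_numeral)
    ultimately show ?thesis by simp
  qed
  also have "D powr (lam + 1) / W^4 \<le> 4 * (1 - cmod b) powr (lam + 1) / W^4"
    using Dpow_le[OF b lam] W0 by (simp add: D_def divide_right_mono)
  also have "\<dots> \<le> 9 * (1 - cmod b) powr (lam + 1) / W^4"
    using W0 by (intro divide_right_mono mult_right_mono) auto
  finally show ?thesis by (simp add: D_def W_def)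
qed

lemma deriv_Fb_bound:
  assumes b: "b \<in> disc" and z: "z \<in> disc" and lam: "0 < lam" "lam < 1"
  shows "(cmod (deriv (\<lambda>z. complex_of_real (1 - (cmod b)\<^sup>2) * (1 - cnj b * z) powr complex_of_real ((lam - 3) / 2)) z))\<^sup>2
      \<le> 9 * (1 - cmod b) powr (lam + 1) / (cmod (1 - cnj b * z))^4"
proof -
  define D where "D = 1 - (cmod b)\<^sup>2"
  define d where "d = 1 - cmod b"
  define W where "W = cmod (1 - cnj b * z)"
  define e where "e = (lam - 3) / 2"
  note DF = D_facts[OF b]
  have D0: "0 < D" "D \<le> 2 * d" using DF by (auto simp: D_def d_def)
  have d0: "0 < d" using DF by (simp add: d_def)
  have zU: "z \<in> Ub b" using disc_Ub[OF b] z by auto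
  have W0: "0 < W" using Ub_nz[OF zU] by (simp add: W_def)
  have Wd: "d \<le> W" using w_lower[OF b z] by (simp add: d_def W_def)
  have bl: "cmod b \<le> 1" using b by (simp add: disc_def)
  have "deriv (\<lambda>z. complex_of_real D * (1 - cnj b * z) powr complex_of_real e) z
      = complex_of_real D * (complex_of_real e * (1 - cnj b * z) powr (complex_of_real e - 1) * (- cnj b))"
    by (rule DERIV_imp_deriv[OF powr_deriv[OF zU]])
  moreover have "cmod ((1 - cnj b * z) powr (complex_of_real e - 1)) = W powr (e - 1)"
  proof -
    have "complex_of_real e - 1 = complex_of_real (e - 1)" by simp
    hence "cmod ((1 - cnj b * z) powr (complex_of_real e - 1)) = W powr Re (complex_of_real (e - 1))"
      unfolding W_def by (metis Reals_of_real norm_powr_real_powr')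
    thus ?thesis by simp
  qed
  ultimately have "cmod (deriv (\<lambda>z. complex_of_real D * (1 - cnj b * z) powr complex_of_real e) z)
      = D * \<bar>e\<bar> * W powr (e - 1) * cmod b"
    using D0 by (simp add: norm_mult)
  hence "(cmod (deriv (\<lambda>z. complex_of_real D * (1 - cnj b * z) powr complex_of_real e) z))\<^sup>2
      = D\<^sup>2 * e\<^sup>2 * (W powr (e - 1))\<^sup>2 * (cmod b)\<^sup>2"
    by (simp add: power_mult_distrib)
  also have "(W powr (e - 1))\<^sup>2 = W powr (lam - 1) / W^4"
  proof -
    have "(W powr (e - 1))\<^sup>2 = W powr (2 * e - 2)"
      using W0 by (simp add: power2_eq_square flip: powr_add)
    also have "2 * e - 2 = (lam - 1) - 4" unfolding e_def by (simp add: field_simps)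
    also have "W powr ((lam - 1) - 4) = W powr (lam - 1) / W powr 4" using W0 by (simp only: powr_diff)
    also have "W powr 4 = W^4" using W0 by (simp add: powr_numeral)
    finally show ?thesis .
  qed
  also have "D\<^sup>2 * e\<^sup>2 * (W powr (lam - 1) / W^4) * (cmod b)\<^sup>2 \<le> (4 * d\<^sup>2) * (9/4) * (d powr (lam - 1) / W^4) * 1"
  proof -
    have h1: "D\<^sup>2 \<le> 4 * d\<^sup>2" using D0 power_mono[of D "2*d" 2] by (simp add: power_mult_distrib)
    have "\<bar>e\<bar> \<le> 3/2" using lam unfolding e_def by simp
    hence "\<bar>e\<bar>\<^sup>2 \<le> (3/2)\<^sup>2" by (rule power_mono) (rule abs_ge_zero)
    hence "e\<^sup>2 \<le> (3/2)\<^sup>2" by (simp only: power2_abs)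
    also have "(3/2::real)\<^sup>2 = 9/4" by (simp add: power2_eq_square)
    finally have h2: "e\<^sup>2 \<le> 9/4" .
    have "W powr (lam - 1) \<le> d powr (lam - 1)" using lam d0 Wd by (intro powr_mono2') auto
    hence h3: "W powr (lam - 1) / W^4 \<le> d powr (lam - 1) / W^4" using W0 by (simp add: divide_right_mono)
    have h4: "(cmod b)\<^sup>2 \<le> 1" using bl by (simp add: power_le_one)
    have h12: "D\<^sup>2 * e\<^sup>2 \<le> (4 * d\<^sup>2) * (9/4)" by (rule mult_mono[OF h1 h2]) auto
    have h123: "D\<^sup>2 * e\<^sup>2 * (W powr (lam - 1) / W^4) \<le> (4 * d\<^sup>2) * (9/4) * (d powr (lam - 1) / W^4)"
      by (rule mult_mono[OF h12 h3]) (use W0 in auto)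
    show ?thesis by (rule mult_mono[OF h123 h4]) (use W0 d0 in auto)
  qed
  also have "(4 * d\<^sup>2) * (9/4) * (d powr (lam - 1) / W^4) * 1 = 9 * d powr (lam + 1) / W^4"
  proof -
    have "d powr (lam + 1) = d powr ((lam - 1) + 2)" by (rule arg_cong[where f="\<lambda>x. d powr x"]) simp
    also have "\<dots> = d powr (lam - 1) * d powr 2" by (rule powr_add)
    also have "d powr 2 = d\<^sup>2" using d0 by (simp add: powr_numeral)
    finally have "d\<^sup>2 * d powr (lam - 1) = d powr (lam + 1)" by simp
    thus ?thesis by (simp add: field_simps)
  qed
  finally show ?thesis by (simp add: D_def d_def W_def e_def)
qed



lemma geoB:
  assumes b: "b \<in> disc" "1/2 \<le> cmod b" and z: "z \<in> disc"
  defines "bs \<equiv> b / complex_of_real (cmod b)"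
  shows "cmod b * cmod (z - bs) - (1 - cmod b) \<le> cmod (1 - cnj b * z)"
    "1 - cmod z \<le> cmod (z - bs)"
proof -
  have b0: "cmod b > 0" using b(2) by linarith
  have nbs: "cmod bs = 1" using b0 by (simp add: bs_def norm_divide)
  have "bs * cnj b = complex_of_real (cmod b)"
    using b0 by (simp add: bs_def complex_norm_square[symmetric] power2_eq_square)
  hence "bs * (1 - cnj b * z) = bs * (1 - cmod b) + cmod b * (bs - z)"
    by (simp add: algebra_simps)
  hence "cmod (1 - cnj b * z) = cmod (bs * (1 - cmod b) + cmod b * (bs - z))"
    by (metis mult_cancel_right1 nbs norm_mult)
  also have "\<dots> \<ge> cmod (cmod b * (bs - z)) - cmod (bs * (1 - cmod b))"
    by (metis add.commute norm_diff_ineq)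
  ultimately have "cmod (cmod b * (bs - z)) - cmod (bs * (1 - cmod b)) \<le> cmod (1 - cnj b * z)"
    by simp
  moreover have "cmod (complex_of_real (cmod b) * (bs - z)) = cmod b * cmod (z - bs)"
    by (simp add: norm_mult norm_minus_commute)
  moreover have "cmod (bs * complex_of_real (1 - cmod b)) = 1 - cmod b"
  proof -
    have "cmod (complex_of_real (1 - cmod b)) = 1 - cmod b"
      using b by (simp only: norm_of_real) (simp add: disc_def)
    thus ?thesis by (simp only: norm_mult nbs) simp
  qed
  ultimately show "cmod b * cmod (z - bs) - (1 - cmod b) \<le> cmod (1 - cnj b * z)"
    by simp
  show "1 - cmod z \<le> cmod (z - bs)"
    using norm_triangle_ineq2[of bs z] nbs by (simp add: norm_minus_commute)
qed

lemma caseB_point: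
  assumes b: "b \<in> disc" "1/2 \<le> cmod b" and z: "z \<in> disc" and lam: "0 < lam" "lam < 1"
    and gz: "0 \<le> gz" "gz \<le> 9 * d powr (lam + 1) / (cmod (1 - cnj b * z))^4"
    and dd: "d = 1 - cmod b"
    and rho: "rho = cmod (z - b / complex_of_real (cmod b))"
    and k: "rho < 4 * d * 2^k" "k = 0 \<or> 2 * d * 2^k \<le> rho"
  shows "gz * (1 - (cmod z)\<^sup>2) / pi \<le> 36864 * d powr (lam + 1) / (4 * d * 2^k)^3"
proof -
  define P where "P = d powr (lam + 1)"
  define W where "W = cmod (1 - cnj b * z)"
  have d0: "0 < d" using D_facts[OF b(1)] dd by simp
  have P0: "0 < P" using d0 by (simp add: P_def)
  have Wd: "d \<le> W" using w_lower[OF b(1) z] dd by (simp add: W_def)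
  have W0: "0 < W" using Wd d0 by simp
  note g = geoB[OF b z]
  have z1: "cmod z < 1" using z by (simp add: disc_def)
  have "1 - (cmod z)\<^sup>2 = (1 - cmod z) * (1 + cmod z)" by (simp add: power2_eq_square algebra_simps)
  also have "\<dots> \<le> (1 - cmod z) * 2" using z1 by (intro mult_left_mono) auto
  also have "\<dots> \<le> rho * 2" using g(2) rho by simp
  finally have h1: "1 - (cmod z)\<^sup>2 \<le> 2 * rho" by simp
  have h1': "0 \<le> 1 - (cmod z)\<^sup>2" using z1 by (simp add: abs_square_le_1 less_imp_le)
  have "gz * (1 - (cmod z)\<^sup>2) / pi \<le> gz * (1 - (cmod z)\<^sup>2)"
    using divide_left_mono[of 1 pi "gz * (1 - (cmod z)\<^sup>2)"] gz h1' pi_gt3 by simp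
  also have "\<dots> \<le> (9 * P / W^4) * (2 * rho)"
    using gz h1 h1' by (intro mult_mono) (auto simp: P_def W_def)
  finally have v: "gz * (1 - (cmod z)\<^sup>2) / pi \<le> 18 * P * rho / W^4" by simp
  show ?thesis
  proof (cases "k = 0")
    case True
    have "18 * P * rho / W^4 \<le> 18 * P * (4 * d) / d^4"
      using k(1) True W0 Wd d0 P0 rho
      by (intro frac_le mult_left_mono power_mono) auto
    also have "\<dots> = 72 * P / d^3" using d0 by (simp add: power_eq_if)
    also have "\<dots> \<le> 576 * P / d^3" using P0 d0 by (intro divide_right_mono) auto
    also have "\<dots> = 36864 * P / (4 * d * 2^k)^3" using True d0 by (simp add: power3_eq_cube)
    finally show ?thesis using v by (simp add: P_def)
  next
    case False
    with k have r: "2 * d * 2^k \<le> rho" by simp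
    have "(2::real) ^ 1 \<le> 2 ^ k" using False by (intro power_increasing) auto
    hence "2 * d * 2 \<le> 2 * d * 2^k" using d0 by (intro mult_left_mono) auto
    with r have r4: "4 * d \<le> rho" by simp
    have "rho / 4 \<le> W"
    proof -
      have "cmod b * rho - d \<le> W" using g(1) dd rho by (simp add: W_def)
      moreover have "rho / 2 \<le> cmod b * rho" using mult_right_mono[of "1/2" "cmod b" rho] b(2) r4 d0 by simp
      ultimately show ?thesis using r4 by simp
    qed
    have rho0: "0 < rho" using r4 d0 by simp
    have "18 * P * rho / W^4 \<le> 18 * P * rho / (rho/4)^4"
      using \<open>rho / 4 \<le> W\<close> rho0 P0 by (intro divide_left_mono power_mono mult_pos_pos) auto
    also have "\<dots> = 4608 * P / rho^3" using rho0 by (simp add: field_simps power_eq_if)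
    also have "\<dots> \<le> 4608 * P / (2 * d * 2^k)^3"
      using r P0 d0 rho0 by (intro divide_left_mono power_mono mult_pos_pos) auto
    also have "\<dots> = 36864 * P / (4 * d * 2^k)^3" by (simp add: power3_eq_cube field_simps)
    finally show ?thesis using v by (simp add: P_def)
  qed
qed



lemma coreA:
  assumes b: "b \<in> disc" and lam: "0 < lam" "lam < 1" and l: "0 < l" "l \<le> 1"
    and g: "\<And>z. z \<in> disc \<Longrightarrow> 0 \<le> g z \<and> g z \<le> 9 * (1 - cmod b) powr (lam + 1) / (cmod (1 - cnj b * z))^4"
    and cs: "l \<le> 1 - cmod b \<or> cmod b < 1/2"
  shows "ennreal (l powr (-lam)) * (\<integral>\<^sup>+ z. indicator (Sbox a l) z * ennreal (g z * (1 - (cmod z)\<^sup>2) / pi) \<partial>lborel) \<le> ennreal 73728"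
proof -
  define d where "d = 1 - cmod b"
  have d0: "0 < d" using D_facts[OF b] by (simp add: d_def)
  define c where "c = 18 * d powr (lam - 3) * l"
  have c0: "0 \<le> c" using d0 l by (simp add: c_def)
  have pw: "indicator (Sbox a l) z * ennreal (g z * (1 - (cmod z)\<^sup>2) / pi)
      \<le> ennreal c * indicator (ball (cis a) (9 * l)) z" for z
  proof (cases "z \<in> Sbox a l")
    case True
    note S = Sbox_facts[OF True l]
    have zd: "z \<in> disc" using S(1) by (simp add: disc_def)
    define W where "W = cmod (1 - cnj b * z)"
    have Wd: "d \<le> W" using w_lower[OF b zd] by (simp add: d_def W_def)
    have gz: "0 \<le> g z" "g z \<le> 9 * d powr (lam + 1) / W^4" using g[OF zd] by (auto simp: d_def W_def)
    have h1: "1 - (cmod z)\<^sup>2 \<le> 2 * l"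
    proof -
      have "1 - (cmod z)\<^sup>2 = (1 - cmod z) * (1 + cmod z)" by (simp add: power2_eq_square algebra_simps)
      also have "\<dots> \<le> l * 2" using S(1,2) by (intro mult_mono) auto
      finally show ?thesis by simp
    qed
    have h1': "0 \<le> 1 - (cmod z)\<^sup>2" using S(1) by (simp add: abs_square_le_1 less_imp_le)
    have "g z * (1 - (cmod z)\<^sup>2) / pi \<le> g z * (1 - (cmod z)\<^sup>2)"
      using divide_left_mono[of 1 pi "g z * (1 - (cmod z)\<^sup>2)"] gz h1' pi_gt3 by simp
    also have "\<dots> \<le> (9 * d powr (lam + 1) / d^4) * (2 * l)"
    proof -
      have "9 * d powr (lam + 1) / W^4 \<le> 9 * d powr (lam + 1) / d^4"
        using d0 Wd by (intro divide_left_mono power_mono mult_pos_pos) auto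
      hence "g z \<le> 9 * d powr (lam + 1) / d^4" using gz by linarith
      thus ?thesis using gz h1 h1' by (intro mult_mono) auto
    qed
    also have "(9 * d powr (lam + 1) / d^4) * (2 * l) = c"
    proof -
      have "d^4 = d powr 4" using d0 by (simp add: powr_numeral)
      hence "d powr (lam + 1) / d^4 = d powr ((lam + 1) - 4)" by (simp only: powr_diff)
      also have "(lam + 1) - 4 = lam - 3" by simp
      finally have e: "d powr (lam + 1) / d^4 = d powr (lam - 3)" .
      have "(9 * d powr (lam + 1) / d^4) * (2 * l) = 18 * (d powr (lam + 1) / d^4) * l" by simp
      thus ?thesis unfolding e c_def .
    qed
    finally have "g z * (1 - (cmod z)\<^sup>2) / pi \<le> c" .
    thus ?thesis using True S(3) by (simp add: ennreal_leI)
  qed (use c0 in simp)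
  have "(\<integral>\<^sup>+ z. indicator (Sbox a l) z * ennreal (g z * (1 - (cmod z)\<^sup>2) / pi) \<partial>lborel)
      \<le> (\<integral>\<^sup>+ z. ennreal c * indicator (ball (cis a) (9 * l)) z \<partial>lborel)"
    by (rule nn_integral_mono) (rule pw)
  also have "\<dots> = ennreal c * emeasure lborel (ball (cis a) (9 * l))"
    by (rule nn_integral_cmult_indicator) simp
  also have "\<dots> \<le> ennreal c * ennreal (4 * (9 * l)^2)"
    using emeasure_ball_le[of "9 * l" "cis a"] l by (intro mult_left_mono) auto
  also have "\<dots> = ennreal (c * (4 * (9 * l)^2))" using c0 by (simp add: ennreal_mult)
  finally have I: "(\<integral>\<^sup>+ z. indicator (Sbox a l) z * ennreal (g z * (1 - (cmod z)\<^sup>2) / pi) \<partial>lborel)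
      \<le> ennreal (c * (4 * (9 * l)^2))" .
  have X: "d powr (lam - 3) * l powr (3 - lam) \<le> 8"
    using cs
  proof
    assume ld: "l \<le> 1 - cmod b"
    have "d powr (lam - 3) \<le> l powr (lam - 3)" using ld l lam by (intro powr_mono2') (auto simp: d_def)
    hence "d powr (lam - 3) * l powr (3 - lam) \<le> l powr (lam - 3) * l powr (3 - lam)"
      by (intro mult_right_mono) auto
    also have "\<dots> = 1" using l by (simp flip: powr_add)
    finally show ?thesis by simp
  next
    assume "cmod b < 1/2"
    hence dh: "1/2 \<le> d" by (simp add: d_def)
    have "d powr (lam - 3) \<le> (1/2) powr (lam - 3)" using dh lam by (intro powr_mono2') auto
    also have "(1/2::real) powr (lam - 3) = 2 powr (3 - lam)"
      by (simp add: powr_divide powr_minus_divide[symmetric] powr_minus)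
    also have "\<dots> \<le> 2 powr 3" using lam by (intro powr_mono) auto
    also have "\<dots> = 8" by simp
    finally have h: "d powr (lam - 3) \<le> 8" .
    have "l powr (3 - lam) \<le> 1" using l lam by (intro powr_le1) auto
    hence "d powr (lam - 3) * l powr (3 - lam) \<le> 8 * 1"
      using h by (intro mult_mono) auto
    thus ?thesis by simp
  qed
  have "ennreal (l powr (-lam)) * (\<integral>\<^sup>+ z. indicator (Sbox a l) z * ennreal (g z * (1 - (cmod z)\<^sup>2) / pi) \<partial>lborel)
     \<le> ennreal (l powr (-lam)) * ennreal (c * (4 * (9 * l)^2))"
    by (intro mult_left_mono I) auto
  also have "\<dots> = ennreal (l powr (-lam) * (c * (4 * (9 * l)^2)))" by (rule ennreal_mult'[symmetric]) simp
  also have "l powr (-lam) * (c * (4 * (9 * l)^2)) = 5832 * (d powr (lam - 3) * l powr (3 - lam))"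
  proof -
    have "l powr (3 - lam) = l powr (-lam + 3)" by (rule arg_cong[where f="\<lambda>x. l powr x"]) simp
    also have "\<dots> = l powr (-lam) * l powr 3" by (rule powr_add)
    also have "l powr 3 = l^3" using l by (simp add: powr_numeral)
    finally have "l powr (-lam) * l^3 = l powr (3 - lam)" by simp
    thus ?thesis unfolding c_def by (simp add: power2_eq_square power3_eq_cube algebra_simps)
  qed
  also have "ennreal (5832 * (d powr (lam - 3) * l powr (3 - lam))) \<le> ennreal 73728"
    using X by (intro ennreal_leI) simp
  finally show ?thesis .
qed

lemma exists_k:
  fixes d rho :: real
  assumes "0 < d" "0 \<le> rho"
  shows "\<exists>k::nat. rho < 4 * d * 2^k \<and> (k = 0 \<or> 2 * d * 2^k \<le> rho)"
proof -
  obtain n where n: "rho / (4 * d) < 2^n" using real_arch_pow[of 2 "rho / (4 * d)"] by auto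
  hence ex: "\<exists>k::nat. rho < 4 * d * 2^k" using assms by (auto simp: field_simps)
  define k where "k = (LEAST k::nat. rho < 4 * d * 2^k)"
  have k1: "rho < 4 * d * 2^k" unfolding k_def by (rule LeastI_ex[OF ex])
  have "k = 0 \<or> 2 * d * 2^k \<le> rho"
  proof (cases k)
    case (Suc m)
    have "\<not> rho < 4 * d * 2^m"
    proof
      assume "rho < 4 * d * 2^m"
      hence "k \<le> m" unfolding k_def by (rule Least_le)
      thus False using Suc by simp
    qed
    thus ?thesis using Suc by simp
  qed simp
  thus ?thesis using k1 by blast
qed

lemma coreB:
  assumes b: "b \<in> disc" and lam: "0 < lam" "lam < 1" and l: "0 < l" "l \<le> 1"
    and g: "\<And>z. z \<in> disc \<Longrightarrow> 0 \<le> g z \<and> g z \<le> 9 * (1 - cmod b) powr (lam + 1) / (cmod (1 - cnj b * z))^4"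
    and cs: "1 - cmod b \<le> l" "1/2 \<le> cmod b"
  shows "ennreal (l powr (-lam)) * (\<integral>\<^sup>+ z. indicator (Sbox a l) z * ennreal (g z * (1 - (cmod z)\<^sup>2) / pi) \<partial>lborel) \<le> ennreal 73728"
proof -
  define d where "d = 1 - cmod b"
  have d0: "0 < d" using D_facts[OF b] by (simp add: d_def)
  define bs where "bs = b / complex_of_real (cmod b)"
  define r where "r k = 4 * d * 2^k" for k :: nat
  define c where "c k = 36864 * d powr (lam + 1) / (r k)^3" for k
  have r0: "0 < r k" for k using d0 by (simp add: r_def)
  have c0: "0 \<le> c k" for k using r0[of k] by (simp add: c_def)
  have pw: "indicator (Sbox a l) z * ennreal (g z * (1 - (cmod z)\<^sup>2) / pi)
      \<le> (\<Sum>k. ennreal (c k) * indicator (ball bs (r k)) z)" for z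
  proof (cases "z \<in> Sbox a l")
    case True
    note S = Sbox_facts[OF True l]
    have zd: "z \<in> disc" using S(1) by (simp add: disc_def)
    define rho where "rho = cmod (z - bs)"
    obtain k where k: "rho < 4 * d * 2^k" "k = 0 \<or> 2 * d * 2^k \<le> rho"
      using exists_k[OF d0, of rho] by (auto simp: rho_def)
    have gz: "0 \<le> g z" "g z \<le> 9 * d powr (lam + 1) / (cmod (1 - cnj b * z))^4"
      using g[OF zd] by (auto simp: d_def)
    have v: "g z * (1 - (cmod z)\<^sup>2) / pi \<le> c k"
      using caseB_point[OF b cs(2) zd lam gz d_def _ k] by (simp add: rho_def bs_def c_def r_def)
    have inb: "z \<in> ball bs (r k)" using k(1) by (simp add: r_def rho_def dist_norm norm_minus_commute)
    have "indicator (Sbox a l) z * ennreal (g z * (1 - (cmod z)\<^sup>2) / pi) \<le> ennreal (c k)"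
      using True v by (simp add: ennreal_leI)
    also have "\<dots> = ennreal (c k) * indicator (ball bs (r k)) z" using inb by simp
    also have "\<dots> \<le> (\<Sum>j. ennreal (c j) * indicator (ball bs (r j)) z)"
    proof -
      define F where "F j = ennreal (c j) * indicator (ball bs (r j)) z" for j
      have "F k \<le> suminf F" using sum_le_suminf[of F "{k}"] by simp
      thus ?thesis unfolding F_def .
    qed
    finally show ?thesis .
  qed simp
  have "(\<integral>\<^sup>+ z. indicator (Sbox a l) z * ennreal (g z * (1 - (cmod z)\<^sup>2) / pi) \<partial>lborel)
      \<le> (\<integral>\<^sup>+ z. (\<Sum>k. ennreal (c k) * indicator (ball bs (r k)) z) \<partial>lborel)"
    by (rule nn_integral_mono) (rule pw)
  also have "\<dots> = (\<Sum>k. \<integral>\<^sup>+ z. ennreal (c k) * indicator (ball bs (r k)) z \<partial>lborel)"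
  proof (rule nn_integral_suminf)
    fix k
    have [measurable]: "ball bs (r k) \<in> sets borel" by simp
    show "(\<lambda>x. ennreal (c k) * indicator (ball bs (r k)) x) \<in> borel_measurable lborel" by measurable
  qed
  also have "\<dots> = (\<Sum>k. ennreal (c k) * emeasure lborel (ball bs (r k)))"
    by (subst nn_integral_cmult_indicator) simp_all
  also have "\<dots> \<le> (\<Sum>k. ennreal (c k * (4 * (r k)^2)))"
  proof (rule suminf_le)
    fix k
    have "ennreal (c k) * emeasure lborel (ball bs (r k)) \<le> ennreal (c k) * ennreal (4 * (r k)^2)"
      using emeasure_ball_le[of "r k" bs] r0[of k] by (intro mult_left_mono) auto
    also have "\<dots> = ennreal (c k * (4 * (r k)^2))" by (rule ennreal_mult'[symmetric]) (rule c0)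
    finally show "ennreal (c k) * emeasure lborel (ball bs (r k)) \<le> ennreal (c k * (4 * (r k)^2))" .
  qed auto
  also have "(\<lambda>k. c k * (4 * (r k)^2)) = (\<lambda>k. 36864 * d powr lam * (1/2)^k)"
  proof
    fix k
    have "d powr (lam + 1) = d powr lam * d" using d0 by (simp add: powr_add)
    thus "c k * (4 * (r k)^2) = 36864 * d powr lam * (1/2)^k"
      using d0 unfolding c_def r_def by (simp add: power2_eq_square power3_eq_cube field_simps power_one_over)
  qed
  also have "(\<Sum>k. ennreal (36864 * d powr lam * (1/2)^k)) = ennreal (36864 * d powr lam * 2)"
  proof (rule suminf_ennreal_eq)
    show "(\<lambda>k. 36864 * d powr lam * (1/2::real)^k) sums (36864 * d powr lam * 2)"
      using sums_mult[OF geometric_sums[of "1/2::real"], of "36864 * d powr lam"] by simp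
  qed simp
  finally have I: "(\<integral>\<^sup>+ z. indicator (Sbox a l) z * ennreal (g z * (1 - (cmod z)\<^sup>2) / pi) \<partial>lborel)
      \<le> ennreal (73728 * d powr lam)" by simp
  have "ennreal (l powr (-lam)) * (\<integral>\<^sup>+ z. indicator (Sbox a l) z * ennreal (g z * (1 - (cmod z)\<^sup>2) / pi) \<partial>lborel)
     \<le> ennreal (l powr (-lam)) * ennreal (73728 * d powr lam)"
    by (intro mult_left_mono I) auto
  also have "\<dots> = ennreal (l powr (-lam) * (73728 * d powr lam))" by (rule ennreal_mult'[symmetric]) simp
  also have "\<dots> \<le> ennreal 73728"
  proof (rule ennreal_leI)
    have "d powr lam \<le> l powr lam" using cs(1) d0 lam by (intro powr_mono2) (auto simp: d_def)
    hence "l powr (-lam) * d powr lam \<le> l powr (-lam) * l powr lam" by (intro mult_left_mono) auto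
    also have "\<dots> = 1" using l by (simp flip: powr_add)
    finally show "l powr (-lam) * (73728 * d powr lam) \<le> 73728" by simp
  qed
  finally show ?thesis .
qed



lemma bdry_eq:
  assumes U: "open U" "cball 0 1 \<subseteq> U" and f: "f holomorphic_on U"
  shows "bdry f t = f (cis t)"
proof -
  have cU: "cis t \<in> U" using U(2) by auto
  have ic: "isCont f (cis t)"
    using holomorphic_on_imp_continuous_on[OF f] U(1) cU continuous_on_eq_continuous_at by blast
  have lim: "((\<lambda>r::real. complex_of_real r * cis t) \<longlongrightarrow> cis t) (at_left 1)"
  proof -
    have "((\<lambda>r::real. complex_of_real r * cis t) \<longlongrightarrow> complex_of_real 1 * cis t) (at_left 1)"
      by (intro tendsto_intros tendsto_ident_at)
    thus ?thesis by simp
  qed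
  have "((\<lambda>r::real. f (complex_of_real r * cis t)) \<longlongrightarrow> f (cis t)) (at_left 1)"
    by (rule isCont_tendsto_compose[OF ic lim])
  thus ?thesis unfolding bdry_def by (intro tendsto_Lim) (auto simp: trivial_limit_at_left_real)
qed

lemma bounded_on_cball:
  assumes U: "open U" "cball 0 1 \<subseteq> U" and f: "f holomorphic_on U"
  obtains M where "0 < M" "\<And>z. z \<in> cball 0 1 \<Longrightarrow> cmod (f z) \<le> M"
proof -
  have "continuous_on (cball 0 1) f"
    using holomorphic_on_imp_continuous_on[OF f] U(2) continuous_on_subset by blast
  hence "compact (f ` cball 0 1)" by (intro compact_continuous_image) auto
  hence "bounded (f ` cball 0 1)" by (rule compact_imp_bounded)
  then obtain M where "0 < M" "\<And>x. x \<in> f ` cball 0 1 \<Longrightarrow> norm x \<le> M" by (auto simp: bounded_pos)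
  thus ?thesis using that by auto
qed

lemma member_L2lam:
  assumes U: "open U" "cball 0 1 \<subseteq> U" and f: "f holomorphic_on U" and lam: "0 < lam" "lam \<le> 1"
  shows "f \<in> L2lam lam"
proof -
  obtain M where M: "0 < M" "\<And>z. z \<in> cball 0 1 \<Longrightarrow> cmod (f z) \<le> M"
    using bounded_on_cball[OF U f] by blast
  have bd: "bdry f t = f (cis t)" for t by (rule bdry_eq[OF U f])
  have bM: "cmod (bdry f t) \<le> M" for t using M(2)[of "cis t"] bd by simp
  have H: "f \<in> H2"
    unfolding H2_def
  proof (intro CollectI conjI exI ballI)
    show "f holomorphic_on disc" using U(2) by (intro holomorphic_on_subset[OF f]) (auto simp: disc_def)
    fix r :: real assume r: "r \<in> {0..<1}"
    have "(\<integral>\<^sup>+ t. indicator {0..2*pi} t * ennreal ((cmod (f (complex_of_real r * cis t)))\<^sup>2 / (2*pi)) \<partial>lborel)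
        \<le> (\<integral>\<^sup>+ t. ennreal (M^2 / (2*pi)) * indicator {0..2*pi} t \<partial>lborel)"
    proof (rule nn_integral_mono)
      fix t
      have "cmod (complex_of_real r * cis t) \<le> 1" using r by (simp add: norm_mult)
      hence "cmod (f (complex_of_real r * cis t)) \<le> M" using M(2) by simp
      hence "(cmod (f (complex_of_real r * cis t)))\<^sup>2 \<le> M^2" by (intro power_mono) auto
      hence "(cmod (f (complex_of_real r * cis t)))\<^sup>2 / (2*pi) \<le> M^2 / (2*pi)"
        by (intro divide_right_mono) auto
      thus "indicator {0..2*pi} t * ennreal ((cmod (f (complex_of_real r * cis t)))\<^sup>2 / (2*pi))
          \<le> ennreal (M^2 / (2*pi)) * indicator {0..2*pi} t"
        by (auto simp: indicator_def ennreal_leI)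
    qed
    also have "\<dots> = ennreal (M^2 / (2*pi)) * emeasure lborel {0..2*pi}"
      by (rule nn_integral_cmult_indicator) simp
    also have "\<dots> = ennreal (M^2)"
      by (simp add: ennreal_mult'[symmetric])
    finally show "(\<integral>\<^sup>+ t. indicator {0..2*pi} t * ennreal ((cmod (f (complex_of_real r * cis t)))\<^sup>2 / (2*pi)) \<partial>lborel)
        \<le> ennreal (M^2)" .
  qed
  have cont: "continuous_on A (bdry f)" for A
  proof -
    have "continuous_on UNIV (\<lambda>t. f (cis t))"
    proof (rule continuous_on_compose2[of U f])
      show "continuous_on U f" using holomorphic_on_imp_continuous_on[OF f] .
      show "continuous_on UNIV cis" by (intro continuous_intros)
      show "cis ` UNIV \<subseteq> U" using U(2) by auto
    qed
    hence "continuous_on A (\<lambda>t. f (cis t))" by (rule continuous_on_subset) simp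
    thus ?thesis using bd by simp
  qed
  have avg: "cmod (arc_avg f a l) \<le> M" if l: "0 < l" for a l
  proof -
    have si: "set_integrable lborel {a..a + 2*pi*l} (bdry f)"
      by (rule borel_integrable_atLeastAtMost'[OF cont])
    have "(LBINT t=a..a + 2*pi*l. bdry f t) = (LBINT t:{a..a + 2*pi*l}. bdry f t)"
      using l by (intro interval_integral_Icc) simp
    also have "\<dots> = integral\<^sup>L lborel (\<lambda>t. indicator {a..a + 2*pi*l} t *\<^sub>R bdry f t)"
      by (simp add: set_lebesgue_integral_def)
    finally have e: "(LBINT t=a..a + 2*pi*l. bdry f t) = integral\<^sup>L lborel (\<lambda>t. indicator {a..a + 2*pi*l} t *\<^sub>R bdry f t)" .
    have "ennreal (cmod (LBINT t=a..a + 2*pi*l. bdry f t))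
        \<le> (\<integral>\<^sup>+ t. norm (indicator {a..a + 2*pi*l} t *\<^sub>R bdry f t) \<partial>lborel)"
      unfolding e using si unfolding set_integrable_def by (rule integral_norm_bound_ennreal)
    also have "\<dots> \<le> (\<integral>\<^sup>+ t. ennreal M * indicator {a..a + 2*pi*l} t \<partial>lborel)"
      by (rule nn_integral_mono) (auto simp: indicator_def bM ennreal_leI)
    also have "\<dots> = ennreal M * emeasure lborel {a..a + 2*pi*l}"
      by (rule nn_integral_cmult_indicator) simp
    also have "\<dots> = ennreal (M * (2*pi*l))" using l M by (simp add: ennreal_mult'[symmetric])
    finally have "cmod (LBINT t=a..a + 2*pi*l. bdry f t) \<le> M * (2*pi*l)"
      using M l by (subst (asm) ennreal_le_iff) auto
    hence "(1 / l) * ((1 / (2*pi)) * cmod (LBINT t=a..a + 2*pi*l. bdry f t)) \<le> (1 / l) * ((1 / (2*pi)) * (M * (2*pi*l)))"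
      using l by (intro mult_left_mono) auto
    also have "\<dots> = M" using l by simp
    finally have fin: "cmod (LBINT t=a..a + 2*pi*l. bdry f t) / (l * (2 * pi)) \<le> M" by simp
    have "cmod (complex_of_real l * (2 * complex_of_real pi)) = l * (2 * pi)"
      using l by (simp add: norm_mult)
    thus ?thesis using fin unfolding arc_avg_def by (simp add: norm_divide)
  qed
  have sq: "ennsqrt (ennreal (l powr (-lam)) *
       (\<integral>\<^sup>+ t. indicator {a..a + 2*pi*l} t * ennreal ((cmod (bdry f t - arc_avg f a l))\<^sup>2 / (2*pi)) \<partial>lborel))
      \<le> ennreal (2 * M)" if l: "0 < l" "l \<le> 1" for a l
  proof -
    have "(\<integral>\<^sup>+ t. indicator {a..a + 2*pi*l} t * ennreal ((cmod (bdry f t - arc_avg f a l))\<^sup>2 / (2*pi)) \<partial>lborel)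
        \<le> (\<integral>\<^sup>+ t. ennreal ((2*M)^2 / (2*pi)) * indicator {a..a + 2*pi*l} t \<partial>lborel)"
    proof (rule nn_integral_mono)
      fix t
      have "cmod (bdry f t - arc_avg f a l) \<le> cmod (bdry f t) + cmod (arc_avg f a l)" by (rule norm_triangle_ineq4)
      also have "\<dots> \<le> 2 * M" using bM[of t] avg[OF l(1), of a] by simp
      finally have "(cmod (bdry f t - arc_avg f a l))\<^sup>2 \<le> (2*M)^2" by (intro power_mono) auto
      hence "(cmod (bdry f t - arc_avg f a l))\<^sup>2 / (2*pi) \<le> (2*M)^2 / (2*pi)" by (intro divide_right_mono) auto
      thus "indicator {a..a + 2*pi*l} t * ennreal ((cmod (bdry f t - arc_avg f a l))\<^sup>2 / (2*pi))
          \<le> ennreal ((2*M)^2 / (2*pi)) * indicator {a..a + 2*pi*l} t"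
        by (auto simp: indicator_def ennreal_leI)
    qed
    also have "\<dots> = ennreal ((2*M)^2 / (2*pi)) * emeasure lborel {a..a + 2*pi*l}"
      by (rule nn_integral_cmult_indicator) simp
    also have "\<dots> = ennreal ((2*M)^2 * l)" using l by (simp add: ennreal_mult'[symmetric])
    finally have I: "(\<integral>\<^sup>+ t. indicator {a..a + 2*pi*l} t * ennreal ((cmod (bdry f t - arc_avg f a l))\<^sup>2 / (2*pi)) \<partial>lborel)
        \<le> ennreal ((2*M)^2 * l)" .
    have "ennreal (l powr (-lam)) *
       (\<integral>\<^sup>+ t. indicator {a..a + 2*pi*l} t * ennreal ((cmod (bdry f t - arc_avg f a l))\<^sup>2 / (2*pi)) \<partial>lborel)
       \<le> ennreal (l powr (-lam)) * ennreal ((2*M)^2 * l)" by (intro mult_left_mono I) auto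
    also have "\<dots> = ennreal (l powr (-lam) * ((2*M)^2 * l))" by (rule ennreal_mult'[symmetric]) simp
    also have "\<dots> \<le> ennreal ((2*M)^2)"
    proof (rule ennreal_leI)
      have "l powr (1 - lam) = l powr (-lam + 1)" by (rule arg_cong[where f="\<lambda>x. l powr x"]) simp
      also have "\<dots> = l powr (-lam) * l powr 1" by (rule powr_add)
      also have "\<dots> = l powr (-lam) * l" using l by simp
      finally have "l powr (-lam) * l = l powr (1 - lam)" by simp
      also have "\<dots> \<le> 1" using l lam by (intro powr_le1) auto
      finally have "l powr (-lam) * l \<le> 1" .
      hence "(2*M)^2 * (l powr (-lam) * l) \<le> (2*M)^2 * 1" by (intro mult_left_mono) auto
      thus "l powr (-lam) * ((2*M)^2 * l) \<le> (2*M)^2" by (simp add: algebra_simps)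
    qed
    finally have X: "ennreal (l powr (-lam)) *
       (\<integral>\<^sup>+ t. indicator {a..a + 2*pi*l} t * ennreal ((cmod (bdry f t - arc_avg f a l))\<^sup>2 / (2*pi)) \<partial>lborel)
       \<le> ennreal ((2*M)^2)" .
    show ?thesis
    proof -
      let ?x = "ennreal (l powr (-lam)) *
       (\<integral>\<^sup>+ t. indicator {a..a + 2*pi*l} t * ennreal ((cmod (bdry f t - arc_avg f a l))\<^sup>2 / (2*pi)) \<partial>lborel)"
      have nt: "?x \<noteq> top" using X by (auto simp: top_unique)
      have "enn2real ?x \<le> (2*M)^2" using X nt M by (simp add: enn2real_leI)
      hence "sqrt (enn2real ?x) \<le> sqrt ((2*M)^2)" by (rule real_sqrt_le_mono)
      also have "\<dots> = 2 * M" using M by (simp only: real_sqrt_abs)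
      finally show ?thesis unfolding ennsqrt_def using nt by (simp add: ennreal_leI)
    qed
  qed
  have "bdry_morrey lam f \<le> ennreal (2 * M)"
    unfolding bdry_morrey_def by (rule SUP_least) (auto intro!: sq)
  hence "bdry_morrey lam f < top" by (simp add: le_less_trans)
  thus ?thesis using H by (simp add: L2lam_def)
qed



lemma ennsqrt_le:
  assumes "x \<le> ennreal K" "0 \<le> K"
  shows "ennsqrt x \<le> ennreal (sqrt K)"
proof -
  have nt: "x \<noteq> top" using assms by (auto simp: top_unique)
  have "enn2real x \<le> K" using assms nt by (simp add: enn2real_leI)
  hence "sqrt (enn2real x) \<le> sqrt K" by (rule real_sqrt_le_mono)
  thus ?thesis unfolding ennsqrt_def using nt by (simp add: ennreal_leI)
qed

lemma core:
  assumes b: "b \<in> disc" and lam: "0 < lam" "lam < 1" and l: "0 < l" "l \<le> 1"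
    and g: "\<And>z. z \<in> disc \<Longrightarrow> 0 \<le> g z \<and> g z \<le> 9 * (1 - cmod b) powr (lam + 1) / (cmod (1 - cnj b * z))^4"
  shows "ennreal (l powr (-lam)) * (\<integral>\<^sup>+ z. indicator (Sbox a l) z * ennreal (g z * (1 - (cmod z)\<^sup>2) / pi) \<partial>lborel) \<le> ennreal 73728"
proof (cases "l \<le> 1 - cmod b \<or> cmod b < 1/2")
  case True
  show ?thesis by (rule coreA[OF b lam l g True]) blast
next
  case False
  hence cs: "1 - cmod b \<le> l" "1/2 \<le> cmod b" by auto
  show ?thesis by (rule coreB[OF b lam l g cs]) blast
qed

lemma norm_bound:
  assumes b: "b \<in> disc" and lam: "0 < lam" "lam < 1"
    and db: "\<And>z. z \<in> disc \<Longrightarrow> (cmod (deriv f z))\<^sup>2 \<le> 9 * (1 - cmod b) powr (lam + 1) / (cmod (1 - cnj b * z))^4"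
    and f0: "cmod (f 0) \<le> 1"
  shows "L2lam_norm lam f \<le> ennreal (1 + sqrt 73728)"
proof -
  have S: "(SUP (a, l)\<in>UNIV \<times> {0<..1}.
     ennsqrt (ennreal (l powr (-lam)) *
       (\<integral>\<^sup>+ z. indicator (Sbox a l) z *
           ennreal ((cmod (deriv f z))\<^sup>2 * (1 - (cmod z)\<^sup>2) / pi) \<partial>lborel))) \<le> ennreal (sqrt 73728)"
  proof (rule SUP_least, clarify)
    fix a l :: real assume "l \<in> {0<..1}"
    hence l: "0 < l" "l \<le> 1" by auto
    show "ennsqrt (ennreal (l powr (-lam)) *
       (\<integral>\<^sup>+ z. indicator (Sbox a l) z *
           ennreal ((cmod (deriv f z))\<^sup>2 * (1 - (cmod z)\<^sup>2) / pi) \<partial>lborel)) \<le> ennreal (sqrt 73728)"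
      by (rule ennsqrt_le[OF core[OF b lam l, where g="\<lambda>z. (cmod (deriv f z))\<^sup>2"]]) (use db in auto)
  qed
  have "L2lam_norm lam f \<le> ennreal 1 + ennreal (sqrt 73728)"
    unfolding L2lam_norm_def using S f0 by (intro add_mono) (auto intro: ennreal_leI)
  also have "\<dots> = ennreal (1 + sqrt 73728)" by (simp add: ennreal_plus)
  finally show ?thesis .
qed

lemma holo_Ub:
  assumes "\<And>z. z \<in> Ub b \<Longrightarrow> \<exists>f'. (f has_field_derivative f') (at z)"
  shows "f holomorphic_on Ub b"
  using assms open_Ub[of b] by (simp add: holomorphic_on_open)

theorem lemma4:
  fixes lam :: real
  assumes "0 < lam" and "lam < 1"
  shows "\<exists>C::real. \<forall>b\<in>disc.
     (\<lambda>z. complex_of_real ((1 - (cmod b)\<^sup>2) powr ((lam - 1) / 2)) * (sigma b z - b)) \<in> L2lam lam \<and>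
     (\<lambda>z. complex_of_real (1 - (cmod b)\<^sup>2) * (1 - cnj b * z) powr complex_of_real ((lam - 3) / 2)) \<in> L2lam lam \<and>
     L2lam_norm lam (\<lambda>z. complex_of_real ((1 - (cmod b)\<^sup>2) powr ((lam - 1) / 2)) * (sigma b z - b)) \<le> ennreal C \<and>
     L2lam_norm lam (\<lambda>z. complex_of_real (1 - (cmod b)\<^sup>2) * (1 - cnj b * z) powr complex_of_real ((lam - 3) / 2)) \<le> ennreal C"
proof (intro exI ballI conjI)
  fix b assume b: "b \<in> disc"
  note lam = assms
  have h1: "(\<lambda>z. complex_of_real ((1 - (cmod b)\<^sup>2) powr ((lam - 1) / 2)) * (sigma b z - b)) holomorphic_on Ub b"
    by (rule holo_Ub) (use sigma_deriv in blast)
  have h2: "(\<lambda>z. complex_of_real (1 - (cmod b)\<^sup>2) * (1 - cnj b * z) powr complex_of_real ((lam - 3) / 2)) holomorphic_on Ub b"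
    by (rule holo_Ub) (use powr_deriv in blast)
  show "(\<lambda>z. complex_of_real ((1 - (cmod b)\<^sup>2) powr ((lam - 1) / 2)) * (sigma b z - b)) \<in> L2lam lam"
    by (rule member_L2lam[OF open_Ub cball_Ub[OF b] h1]) (use lam in auto)
  show "(\<lambda>z. complex_of_real (1 - (cmod b)\<^sup>2) * (1 - cnj b * z) powr complex_of_real ((lam - 3) / 2)) \<in> L2lam lam"
    by (rule member_L2lam[OF open_Ub cball_Ub[OF b] h2]) (use lam in auto)
  show "L2lam_norm lam (\<lambda>z. complex_of_real ((1 - (cmod b)\<^sup>2) powr ((lam - 1) / 2)) * (sigma b z - b)) \<le> ennreal (1 + sqrt 73728)"
    by (rule norm_bound[OF b lam deriv_fb_bound[OF b _ lam]]) (simp_all add: sigma_def)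
  show "L2lam_norm lam (\<lambda>z. complex_of_real (1 - (cmod b)\<^sup>2) * (1 - cnj b * z) powr complex_of_real ((lam - 3) / 2)) \<le> ennreal (1 + sqrt 73728)"
  proof (rule norm_bound[OF b lam deriv_Fb_bound[OF b _ lam]])
    have "0 \<le> 1 - (cmod b)\<^sup>2" using D_facts[OF b] by simp
    hence "cmod (complex_of_real (1 - (cmod b)\<^sup>2)) = 1 - (cmod b)\<^sup>2" by (simp only: norm_of_real)
    thus "cmod (complex_of_real (1 - (cmod b)\<^sup>2) * (1 - cnj b * 0) powr complex_of_real ((lam - 3) / 2)) \<le> 1"
      by (simp del: of_real_diff of_real_power)
  qed
qed


end
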